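(* Let $A$ be a ring and $|\cdot|:A\to R$ a pre-archimedean generalized seminorm, i.e. $|a+b|\le\max(|2|,1)\cdot\max(|a|,|b|)$ for all $a,b\in A$. Then the following are equivalent: (i) $|\cdot|$ is non-archimedean, i.e. $|a+b|\le\max(|a|,|b|)$ for all $a,b\in A$; (ii) $|n|\le1$ for all $n\in\mathbb{N}$; (iii) $|2|\le1$. Moreover, if $R_2\subset R^\times$ denotes the convex subgroup generated by $|2|$, then the induced map $|\cdot|':A\to R_{R^\times/R_2}$ (sending $a$ to $0$ if $|a|=0$ and to the class of $|a|$ otherwise) is a non-archimedean seminorm.
   Context: A halo is a commutative unital semiring with a partial order compatible with $+$ and $\cdot$; an aura is a halo whose semiring is a semifield; positive means $0<1$. A generalized seminorm on a ring $A$ is a map $|\cdot|:A\to R$ into a positive totally ordered aura $R$ with $|0|=0$, $|1|=1$, $|a+b|\le|a|+|b|$, $|ab|\le|a||b|$; here $n\in\mathbb{N}$ denotes $1+\dots+1$ in $A$. $R^\times=R\setminus\{0\}$ is a totally ordered abelian group; a subgroup $H$ is convex if $g<h<k$ with $g,k\in H$ implies $h\in H$. For a totally ordered group $\Gamma$, $R_\Gamma=\{0\}\cup\Gamma$ is the halo with $0$ below and absorbing all elements of $\Gamma$, the order and multiplication of $\Gamma$, and addition $a+b=\max(a,b)$; $R^\times/R_2$ carries the quotient total order. *)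

theory Defs
  imports Main
begin

class pos_tot_aura = comm_semiring_1 + linorder +
  assumes aura_add_mono: "a \<le> b \<Longrightarrow> a + c \<le> b + c"
  and aura_mult_mono: "a \<le> b \<Longrightarrow> a * c \<le> b * c"
  and aura_inverse_ex: "a \<noteq> 0 \<Longrightarrow> \<exists>b. a * b = 1"
  and aura_zero_less_one: "0 < 1"

definition gen_seminorm :: "('a::comm_ring_1 \<Rightarrow> 'r::pos_tot_aura) \<Rightarrow> bool" where
  "gen_seminorm N \<longleftrightarrow> N 0 = 0 \<and> N 1 = 1 \<and>
     (\<forall>a b. N (a + b) \<le> N a + N b) \<and> (\<forall>a b. N (a * b) \<le> N a * N b)"

definition pre_archimedean :: "('a::comm_ring_1 \<Rightarrow> 'r::pos_tot_aura) \<Rightarrow> bool" where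
  "pre_archimedean N \<longleftrightarrow> (\<forall>a b. N (a + b) \<le> max (N 2) 1 * max (N a) (N b))"

definition non_archimedean :: "('a::comm_ring_1 \<Rightarrow> 'r::pos_tot_aura) \<Rightarrow> bool" where
  "non_archimedean N \<longleftrightarrow> (\<forall>a b. N (a + b) \<le> max (N a) (N b))"

definition convex_subgroup :: "'r::pos_tot_aura set \<Rightarrow> bool" where
  "convex_subgroup H \<longleftrightarrow> H \<subseteq> {x. x \<noteq> 0} \<and> 1 \<in> H \<and>
     (\<forall>x\<in>H. \<forall>y\<in>H. x * y \<in> H) \<and> (\<forall>x\<in>H. \<exists>y\<in>H. x * y = 1) \<and>
     (\<forall>g\<in>H. \<forall>k\<in>H. \<forall>h. g < h \<and> h < k \<longrightarrow> h \<in> H)"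

text \<open>Convex subgroup of R^x generated by an element x (trivial subgroup if x = 0,
 since then x is not in R^x).\<close>

definition conv_gen :: "'r::pos_tot_aura \<Rightarrow> 'r set" where
  "conv_gen x = \<Inter>{H. convex_subgroup H \<and> (x \<noteq> 0 \<longrightarrow> x \<in> H)}"

definition coset :: "'r::pos_tot_aura set \<Rightarrow> 'r \<Rightarrow> 'r set" where
  "coset H x = {x * h | h. h \<in> H}"

text \<open>The halo R_Gamma for Gamma = R^x / H: elements are None (the zero) or
 Some C for a coset C.\<close>

fun rg_le :: "'r::pos_tot_aura set option \<Rightarrow> 'r set option \<Rightarrow> bool" where
  "rg_le None _ = True"
| "rg_le (Some C) None = False"
| "rg_le (Some C) (Some D) = (\<exists>c\<in>C. \<exists>d\<in>D. c \<le> d)"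

fun rg_mult :: "'r::pos_tot_aura set option \<Rightarrow> 'r set option \<Rightarrow> 'r set option" where
  "rg_mult None _ = None"
| "rg_mult (Some C) None = None"
| "rg_mult (Some C) (Some D) = Some {c * d | c d. c \<in> C \<and> d \<in> D}"

definition rg_add :: "'r::pos_tot_aura set option \<Rightarrow> 'r set option \<Rightarrow> 'r set option" where
  "rg_add x y = (if rg_le x y then y else x)"

definition rg_one :: "'r::pos_tot_aura set \<Rightarrow> 'r set option" where
  "rg_one H = Some (coset H 1)"

definition induced_norm :: "'r::pos_tot_aura set \<Rightarrow> ('a \<Rightarrow> 'r) \<Rightarrow> 'a \<Rightarrow> 'r set option" where
  "induced_norm H N a = (if N a = 0 then None else Some (coset H (N a)))"

text \<open>A non-archimedean (generalized) seminorm into R_{R^x/H}; since addition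
 in R_Gamma is max, this also contains the triangle inequality.\<close>

definition rg_nonarch_seminorm :: "'r::pos_tot_aura set \<Rightarrow> ('a::comm_ring_1 \<Rightarrow> 'r set option) \<Rightarrow> bool" where
  "rg_nonarch_seminorm H M \<longleftrightarrow> M 0 = None \<and> M 1 = rg_one H \<and>
     (\<forall>a b. rg_le (M (a + b)) (rg_add (M a) (M b))) \<and>
     (\<forall>a b. rg_le (M (a * b)) (rg_mult (M a) (M b)))"

end

theory Submission
  imports Defs
begin

lemma aura_zero_le_one: "(0::'r::pos_tot_aura) \<le> 1"
  using aura_zero_less_one by (rule less_imp_le)

lemma aura_nonneg: "(0::'r::pos_tot_aura) \<le> c"
proof -
  have "0 * c \<le> 1 * c" using aura_mult_mono[OF aura_zero_le_one, of c] by simp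
  thus ?thesis by simp
qed

lemma aura_mult_mono2:
  fixes a b c d :: "'r::pos_tot_aura"
  assumes "a \<le> b" "c \<le> d" shows "a * c \<le> b * d"
proof -
  have "a * c \<le> b * c" using aura_mult_mono[OF assms(1)] .
  also have "\<dots> \<le> b * d" using aura_mult_mono[OF assms(2), of b] by (simp add: mult.commute)
  finally show ?thesis .
qed

lemma conv_gen_one: "1 \<in> conv_gen x"
  unfolding conv_gen_def
proof (rule InterI)
  fix H assume "H \<in> {H. convex_subgroup H \<and> (x \<noteq> 0 \<longrightarrow> x \<in> H)}"
  then have "convex_subgroup H" by simp
  then show "1 \<in> H" unfolding convex_subgroup_def by (elim conjE) assumption
qed

lemma conv_gen_mult: "a \<in> conv_gen x \<Longrightarrow> b \<in> conv_gen x \<Longrightarrow> a * b \<in> conv_gen x"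
  unfolding conv_gen_def
proof (rule InterI)
  fix H assume H: "H \<in> {H. convex_subgroup H \<and> (x \<noteq> 0 \<longrightarrow> x \<in> H)}"
    and a: "a \<in> \<Inter>{H. convex_subgroup H \<and> (x \<noteq> 0 \<longrightarrow> x \<in> H)}"
    and b: "b \<in> \<Inter>{H. convex_subgroup H \<and> (x \<noteq> 0 \<longrightarrow> x \<in> H)}"
  have aH: "a \<in> H" using InterD[OF a H] .
  have bH: "b \<in> H" using InterD[OF b H] .
  from H have "convex_subgroup H" by simp
  then have "\<forall>x\<in>H. \<forall>y\<in>H. x * y \<in> H" unfolding convex_subgroup_def by (elim conjE) assumption
  then show "a * b \<in> H" using aH bH by blast
qed

lemma conv_gen_self: "x \<noteq> 0 \<Longrightarrow> x \<in> conv_gen x"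
  unfolding conv_gen_def by (rule InterI) simp

lemma coset_self: "y \<in> coset (conv_gen x) y"
  unfolding coset_def using conv_gen_one[of x] by force

lemma coset_mem: "h \<in> conv_gen x \<Longrightarrow> y * h \<in> coset (conv_gen x) y"
  unfolding coset_def by blast

lemma max_in_H: "max x 1 \<in> conv_gen (x::'r::pos_tot_aura)"
proof (cases "x \<le> 1")
  case True then show ?thesis using conv_gen_one by (simp add: max_def)
next
  case False
  then have "x \<noteq> 0" using aura_zero_le_one by auto
  with False show ?thesis using conv_gen_self by (simp add: max_def)
qed

theorem lemma2p6:
  fixes N :: "'a::comm_ring_1 \<Rightarrow> 'r::pos_tot_aura"
  assumes "gen_seminorm N"
    and "pre_archimedean N"
  shows "(non_archimedean N \<longleftrightarrow> (\<forall>n::nat. N (of_nat n) \<le> 1))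
    \<and> ((\<forall>n::nat. N (of_nat n) \<le> 1) \<longleftrightarrow> N 2 \<le> 1)
    \<and> rg_nonarch_seminorm (conv_gen (N 2)) (induced_norm (conv_gen (N 2)) N)"
proof -
  have N0: "N 0 = 0" and N1: "N 1 = 1" and Nmul: "\<And>a b. N (a * b) \<le> N a * N b"
    using assms(1) unfolding gen_seminorm_def by auto
  have pa: "\<And>a b. N (a + b) \<le> max (N 2) 1 * max (N a) (N b)"
    using assms(2) unfolding pre_archimedean_def by auto
  have i_ii: "(\<forall>n::nat. N (of_nat n) \<le> 1)" if na: "non_archimedean N"
  proof
    fix n :: nat show "N (of_nat n) \<le> 1"
    proof (induction n)
      case 0 then show ?case using N0 aura_zero_le_one by simp
    next
      case (Suc n)
      have "N (of_nat (Suc n)) = N (1 + of_nat n)" by simp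
      also have "\<dots> \<le> max (N 1) (N (of_nat n))" using na unfolding non_archimedean_def by blast
      also have "\<dots> \<le> 1" using Suc N1 by simp
      finally show ?case .
    qed
  qed
  have ii_iii: "N 2 \<le> 1" if "\<forall>n::nat. N (of_nat n) \<le> 1"
    using that[rule_format, of 2] by simp
  have iii_i: "non_archimedean N" if "N 2 \<le> 1"
    unfolding non_archimedean_def using pa that by (simp add: max_def)
  define H where "H = conv_gen (N 2)"
  define M where "M = induced_norm H N"
  define m where "m = max (N 2) 1"
  have mH: "m \<in> H" unfolding m_def H_def by (rule max_in_H)
  have add: "rg_le (M (a + b)) (rg_add (M a) (M b))" for a b
  proof (cases "N (a + b) = 0")
    case True then show ?thesis by (simp add: M_def induced_norm_def)
  next
    case nz: False
    have pab: "N (a + b) \<le> m * max (N a) (N b)" using pa m_def by simp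
    show ?thesis
    proof (cases "rg_le (M a) (M b)")
      case le: True
      then have r: "rg_add (M a) (M b) = M b" by (simp add: rg_add_def)
      show ?thesis
      proof (cases "N b = 0")
        case True
        then have "M b = None" by (simp add: M_def induced_norm_def)
        with le have "N a = 0" by (cases "M a") (auto simp: M_def induced_norm_def split: if_splits)
        with True pab have "N (a+b) \<le> 0" by simp
        with nz aura_nonneg[of "N (a+b)"] show ?thesis by simp
      next
        case nbz: False
        have "\<exists>h1\<in>H. \<exists>h2\<in>H. N a * h1 \<le> N b * h2 \<or> N a \<le> N b"
        proof (cases "N a = 0")
          case True then show ?thesis using aura_nonneg[of "N b"] conv_gen_one H_def by auto
        next
          case False
          with le nbz show ?thesis by (auto simp: M_def induced_norm_def coset_def)
        qed
        then obtain h1 h2 where h: "h1 \<in> H" "h2 \<in> H" "N a * h1 \<le> N b * h2 \<or> N a \<le> N b" by blast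
        have "\<exists>c \<in> coset H (N (a+b)). \<exists>d \<in> coset H (N b). c \<le> d"
        proof (cases "N a \<le> N b")
          case True
          have "N (a+b) * 1 \<le> N b * m" using pab True by (simp add: max_def mult.commute)
          then show ?thesis using coset_mem[of 1 "N 2"] coset_mem[OF mH[unfolded H_def]] conv_gen_one
            unfolding H_def by blast
        next
          case False
          then have hh: "N a * h1 \<le> N b * h2" using h by blast
          have "N (a+b) \<le> m * N a" using pab False by (simp add: max_def)
          then have "N (a+b) * h1 \<le> m * N a * h1" by (rule aura_mult_mono)
          also have "\<dots> = m * (N a * h1)" by (simp add: mult.assoc)
          also have "\<dots> \<le> m * (N b * h2)" using aura_mult_mono[OF hh, of m] by (simp add: mult.commute)
          also have "\<dots> = N b * (m * h2)" by (simp add: mult_ac)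
          finally have "N (a+b) * h1 \<le> N b * (m * h2)" .
          moreover have "m * h2 \<in> H" using mH h(2) conv_gen_mult H_def by blast
          ultimately show ?thesis using coset_mem h(1) H_def by blast
        qed
        then show ?thesis using r nz nbz by (simp add: M_def induced_norm_def)
      qed
    next
      case nle: False
      then have r: "rg_add (M a) (M b) = M a" by (simp add: rg_add_def)
      have naz: "N a \<noteq> 0" using nle by (auto simp: M_def induced_norm_def)
      have "N b \<le> N a"
      proof (cases "N b = 0")
        case True then show ?thesis using aura_nonneg by simp
      next
        case False
        show ?thesis
        proof (rule ccontr)
          assume "\<not> N b \<le> N a"
          then have "N a \<le> N b" by simp
          then have "rg_le (M a) (M b)" using naz False coset_self[of "N a" "N 2"] coset_self[of "N b" "N 2"]
            by (auto simp: M_def induced_norm_def H_def)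
          with nle show False by simp
        qed
      qed
      then have "N (a+b) * 1 \<le> N a * m" using pab by (simp add: max_def mult.commute)
      then have "\<exists>c \<in> coset H (N (a+b)). \<exists>d \<in> coset H (N a). c \<le> d"
        using coset_mem[of 1 "N 2"] coset_mem[OF mH[unfolded H_def]] conv_gen_one
        unfolding H_def by blast
      then show ?thesis using r nz naz by (simp add: M_def induced_norm_def)
    qed
  qed
  have mul: "rg_le (M (a * b)) (rg_mult (M a) (M b))" for a b
  proof (cases "N (a * b) = 0")
    case True then show ?thesis by (simp add: M_def induced_norm_def)
  next
    case nz: False
    have le: "N (a*b) \<le> N a * N b" by (rule Nmul)
    have naz: "N a \<noteq> 0" using le nz aura_nonneg[of "N (a*b)"] by auto
    have nbz: "N b \<noteq> 0" using le nz aura_nonneg[of "N (a*b)"] by auto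
    have "N (a*b) * 1 \<le> (N a * 1) * (N b * 1)" using le by simp
    then have "\<exists>c \<in> coset H (N (a*b)). \<exists>d \<in> {c * d |c d. c \<in> coset H (N a) \<and> d \<in> coset H (N b)}. c \<le> d"
      using coset_mem[of 1 "N 2"] conv_gen_one unfolding H_def by blast
    then show ?thesis using nz naz nbz by (simp add: M_def induced_norm_def)
  qed
  have "rg_nonarch_seminorm H M"
    unfolding rg_nonarch_seminorm_def using add mul N0 N1
    by (simp add: M_def induced_norm_def rg_one_def aura_zero_less_one)
  then show ?thesis using i_ii ii_iii iii_i H_def M_def by blast
qed

end
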